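(* Let $X_0^*$ be a $\{1,2,\dots\}$-valued random variable with $\mathbf P(X_0^*=k)\sim c_0m^{-k}k^{-\alpha}$ as $k\to\infty$, for some $0<c_0<\infty$ and $2\le\alpha\le4$. For integers $M$, let $X_0^{(M)}:=X_0^*\mathbf 1_{\{X_0^*\le M\}}$ and $p_M:=\big(1+\mathbf E\{[(m-1)X_0^{(M)}-1]m^{X_0^{(M)}}\}\big)^{-1}$. Then, as $M\to\infty$, $$p_M-p_c(X_0^* )\sim\begin{cases}\frac{(m-1)c_0\,p_c(X_0^* )^2}{\alpha-2}\,\frac{1}{M^{\alpha-2}},&2<\alpha\le4,\\[2pt] \frac{1}{(m-1)c_0}\,\frac{1}{\log M},&\alpha=2.\end{cases}$$
   Context: Fix an integer $m\ge2$. $p_c(X_0^* ):=\frac{1}{1+\mathbf E\{[(m-1)X_0^*-1]m^{X_0^*}\}}$, interpreted as $0$ when the expectation is infinite (so $p_c(X_0^* )=0$ when $\alpha=2$, and $p_c(X_0^* )>0$ when $\alpha>2$); it is the critical parameter of the recursive system $X_{n+1}\overset d=(X_{n,1}+\cdots+X_{n,m}-1)^+$ started from the law $(1-p)\delta_0+pP_{X_0^*}$. $a_M\sim b_M$ means $a_M/b_M\to1$. *)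

theory Defs
  imports "HOL-Probability.Probability" "HOL-Library.Landau_Symbols"
begin

definition wfun :: "nat \<Rightarrow> nat \<Rightarrow> real" where
  "wfun m k = ((real m - 1) * real k - 1) * real m ^ k"

text \<open>p_c(X_0^*) for X_0^* with law P: 1/(1 + E[wfun X]), read as 0 when the
  expectation is infinite (i.e. wfun X is not integrable; wfun is nonnegative on {1,2,...}).\<close>
definition pc :: "nat \<Rightarrow> nat pmf \<Rightarrow> real" where
  "pc m P = (if integrable (measure_pmf P) (wfun m)
             then 1 / (1 + measure_pmf.expectation P (wfun m)) else 0)"

definition trunc :: "nat \<Rightarrow> nat \<Rightarrow> nat" where
  "trunc M k = (if k \<le> M then k else 0)"

definition pM :: "nat \<Rightarrow> nat pmf \<Rightarrow> nat \<Rightarrow> real" where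
  "pM m P M = 1 / (1 + measure_pmf.expectation P (\<lambda>k. wfun m (trunc M k)))"

end

theory Submission imports Defs "HOL-Real_Asymp.Real_Asymp" begin

lemma equiv_bounds:
  fixes a b :: "nat \<Rightarrow> real"
  assumes a0: "\<And>k. 0 \<le> a k" and b0: "\<And>k. 0 \<le> b k" and eq: "a \<sim>[at_top] b" and e: "e > 0"
  shows "eventually (\<lambda>k. \<bar>a k - b k\<bar> \<le> e * b k) at_top"
proof -
  have "eventually (\<lambda>k. norm (a k) \<le> (1+e) * norm (b k)) at_top"
    using asymp_equiv_imp_eventually_le[OF eq] e by simp
  moreover have "eventually (\<lambda>k. (1-e) * norm (b k) \<le> norm (a k)) at_top"
    using asymp_equiv_imp_eventually_ge[OF eq] e by simp
  ultimately show ?thesis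
  proof eventually_elim
    case (elim k)
    then show ?case using a0[of k] b0[of k] by (simp add: abs_le_iff algebra_simps)
  qed
qed

lemma tail_equiv:
  fixes a b :: "nat \<Rightarrow> real"
  assumes a0: "\<And>k. 0 \<le> a k" and b0: "\<And>k. 0 < b k" and sb: "summable b"
    and eq: "a \<sim>[at_top] b"
  shows "summable a" "(\<lambda>M. \<Sum>k. a (k + M)) \<sim>[at_top] (\<lambda>M. \<Sum>k. b (k + M))"
proof -
  have b0': "\<And>k. 0 \<le> b k" using b0 less_imp_le by blast
  have "eventually (\<lambda>k. \<bar>a k - b k\<bar> \<le> 1 * b k) at_top"
    by (rule equiv_bounds[OF a0 b0' eq]) simp
  then have "eventually (\<lambda>k. norm (a k) \<le> 2 * b k) at_top"
    by eventually_elim (use a0 in auto)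
  then show sa: "summable a"
    by (rule summable_comparison_test_ev) (use sb summable_mult in auto)
  show "(\<lambda>M. \<Sum>k. a (k + M)) \<sim>[at_top] (\<lambda>M. \<Sum>k. b (k + M))"
  proof (rule asymp_equivI', subst tendsto_iff, intro allI impI)
    fix e :: real assume e: "e > 0"
    have "eventually (\<lambda>k. \<bar>a k - b k\<bar> \<le> (e/2) * b k) at_top"
      by (rule equiv_bounds[OF a0 b0' eq]) (use e in simp)
    then obtain N where N: "\<And>k. k \<ge> N \<Longrightarrow> \<bar>a k - b k\<bar> \<le> (e/2) * b k"
      unfolding eventually_at_top_linorder by blast
    show "eventually (\<lambda>M. dist ((\<Sum>k. a (k + M)) / (\<Sum>k. b (k + M))) 1 < e) at_top"
      unfolding eventually_at_top_linorder
    proof (intro exI allI impI)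
      fix M assume M: "M \<ge> N"
      have sbM: "summable (\<lambda>k. b (k + M))" using sb by (subst summable_iff_shift)
      have saM: "summable (\<lambda>k. a (k + M))" using sa by (subst summable_iff_shift)
      have sbM': "summable (\<lambda>k. (e/2) * b (k + M))" using sbM by (rule summable_mult)
      have dle: "\<And>k. \<bar>a (k + M) - b (k + M)\<bar> \<le> (e/2) * b (k + M)" using N M by simp
      have sd: "summable (\<lambda>k. \<bar>a (k + M) - b (k + M)\<bar>)"
        by (rule summable_comparison_test'[OF sbM', of 0]) (use dle in simp)
      have Bpos: "(\<Sum>k. b (k + M)) > 0" by (rule suminf_pos[OF sbM]) (use b0 in simp)
      have "\<bar>(\<Sum>k. a (k + M)) - (\<Sum>k. b (k + M))\<bar> = \<bar>\<Sum>k. a (k + M) - b (k + M)\<bar>"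
        using suminf_diff[OF saM sbM] by simp
      also have "\<dots> \<le> (\<Sum>k. \<bar>a (k + M) - b (k + M)\<bar>)" by (rule summable_rabs[OF sd])
      also have "\<dots> \<le> (\<Sum>k. (e/2) * b (k + M))" by (rule suminf_le[OF dle sd sbM'])
      also have "\<dots> = (e/2) * (\<Sum>k. b (k + M))" by (rule suminf_mult[OF sbM])
      finally have *: "\<bar>(\<Sum>k. a (k + M)) - (\<Sum>k. b (k + M))\<bar> \<le> (e/2) * (\<Sum>k. b (k + M))" .
      have "dist ((\<Sum>k. a (k + M)) / (\<Sum>k. b (k + M))) 1
            = \<bar>(\<Sum>k. a (k + M)) - (\<Sum>k. b (k + M))\<bar> / (\<Sum>k. b (k + M))"
        using Bpos by (simp add: dist_real_def field_simps)
      also have "\<dots> \<le> e/2" using * Bpos by (simp add: divide_le_eq)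
      also have "\<dots> < e" using e by simp
      finally show "dist ((\<Sum>k. a (k + M)) / (\<Sum>k. b (k + M))) 1 < e" .
    qed
  qed
qed

lemma partial_equiv:
  fixes a b :: "nat \<Rightarrow> real"
  assumes a0: "\<And>k. 0 \<le> a k" and b0: "\<And>k. 0 \<le> b k"
    and eq: "a \<sim>[at_top] b" and lim: "filterlim (\<lambda>M. \<Sum>k\<le>M. b k) at_top at_top"
  shows "(\<lambda>M. \<Sum>k\<le>M. a k) \<sim>[at_top] (\<lambda>M. \<Sum>k\<le>M. b k)"
proof (rule asymp_equivI', subst tendsto_iff, intro allI impI)
  fix e :: real assume e: "e > 0"
  have "eventually (\<lambda>k. \<bar>a k - b k\<bar> \<le> (e/3) * b k) at_top"
    by (rule equiv_bounds[OF a0 b0 eq]) (use e in simp)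
  then obtain N where N: "\<And>k. k \<ge> N \<Longrightarrow> \<bar>a k - b k\<bar> \<le> (e/3) * b k"
    unfolding eventually_at_top_linorder by blast
  define K where "K = (\<Sum>k<N. \<bar>a k - b k\<bar>)"
  have K0: "K \<ge> 0" unfolding K_def by (rule sum_nonneg) simp
  have bound: "\<bar>(\<Sum>k\<le>M. a k) - (\<Sum>k\<le>M. b k)\<bar> \<le> K + (e/3) * (\<Sum>k\<le>M. b k)" for M
  proof -
    have pt: "\<bar>a k - b k\<bar> \<le> (e/3) * b k + (if k \<in> {..<N} then \<bar>a k - b k\<bar> else 0)" for k
      using N[of k] e b0[of k] by (cases "k < N") auto
    have "\<bar>(\<Sum>k\<le>M. a k) - (\<Sum>k\<le>M. b k)\<bar> = \<bar>\<Sum>k\<le>M. a k - b k\<bar>"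
      by (simp add: sum_subtractf)
    also have "\<dots> \<le> (\<Sum>k\<le>M. \<bar>a k - b k\<bar>)" by (rule sum_abs)
    also have "\<dots> \<le> (\<Sum>k\<le>M. (e/3) * b k + (if k \<in> {..<N} then \<bar>a k - b k\<bar> else 0))"
      by (rule sum_mono) (rule pt)
    also have "\<dots> = (e/3) * (\<Sum>k\<le>M. b k) + (\<Sum>k\<in>{..M} \<inter> {..<N}. \<bar>a k - b k\<bar>)"
      by (simp add: sum.distrib sum_distrib_left sum.inter_restrict)
    also have "(\<Sum>k\<in>{..M} \<inter> {..<N}. \<bar>a k - b k\<bar>) \<le> K"
      unfolding K_def by (rule sum_mono2) auto
    finally show ?thesis by simp
  qed
  have "eventually (\<lambda>M. (\<Sum>k\<le>M. b k) \<ge> 3 * K / e + 1) at_top"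
    using lim by (simp add: filterlim_at_top)
  then show "eventually (\<lambda>M. dist ((\<Sum>k\<le>M. a k) / (\<Sum>k\<le>M. b k)) 1 < e) at_top"
  proof eventually_elim
    case (elim M)
    define B where "B = (\<Sum>k\<le>M. b k)"
    have Bpos: "B > 0" using elim K0 e unfolding B_def
      by (smt (verit) divide_nonneg_pos)
    have KB: "K \<le> (e/3) * B"
    proof -
      have "3 * K / e \<le> B" using elim unfolding B_def by simp
      then have "3 * K \<le> B * e" using e by (simp add: divide_le_eq)
      then show ?thesis by (simp add: mult.commute)
    qed
    have "dist ((\<Sum>k\<le>M. a k) / B) 1 = \<bar>(\<Sum>k\<le>M. a k) - B\<bar> / B"
      using Bpos by (simp add: dist_real_def field_simps)
    also have "\<dots> \<le> (K + (e/3) * B) / B"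
      using bound[of M] Bpos unfolding B_def by (simp add: divide_right_mono)
    also have "\<dots> \<le> (2*e/3 * B) / B" by (intro divide_right_mono) (use KB Bpos in \<open>auto simp: mult.commute\<close>)
    also have "\<dots> < e" using Bpos e by simp
    finally show ?case unfolding B_def .
  qed
qed

lemma pmf_integrable_iff:
  "integrable (measure_pmf P) (f :: nat \<Rightarrow> real) \<longleftrightarrow> summable (\<lambda>k. \<bar>pmf P k * f k\<bar>)"
  unfolding measure_pmf_eq_density
  by (subst integrable_density) (auto simp: integrable_count_space_nat_iff)

lemma pmf_expectation_sum:
  assumes "integrable (measure_pmf P) (f :: nat \<Rightarrow> real)"
  shows "measure_pmf.expectation P f = (\<Sum>k. pmf P k * f k)"
proof -
  have "integrable (count_space UNIV) (\<lambda>k. pmf P k * f k)"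
    using assms unfolding measure_pmf_eq_density
    by (subst (asm) integrable_density) auto
  then show ?thesis unfolding measure_pmf_eq_density
    by (subst integral_density) (auto simp: integral_count_space_nat)
qed

lemma pmf_sums_one: "(\<lambda>k. pmf P k) sums (1::real)"
proof -
  have i: "integrable (measure_pmf P) (\<lambda>_::nat. 1::real)" by simp
  have "summable (\<lambda>k. \<bar>pmf P k * 1\<bar>)" using i by (subst (asm) pmf_integrable_iff)
  then have s: "summable (\<lambda>k. pmf P k)" by simp
  have e1: "(\<Sum>k. pmf P k) = 1" using pmf_expectation_sum[OF i] by simp
  show ?thesis using summable_sums[OF s] unfolding e1 .
qed

lemma wfun_nonneg: "m \<ge> 2 \<Longrightarrow> k \<ge> 1 \<Longrightarrow> 0 \<le> wfun m k"
  unfolding wfun_def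
proof -
  assume "m \<ge> 2" "k \<ge> 1"
  then have "(real m - 1) * real k \<ge> 1 * 1" by (intro mult_mono) auto
  then show "0 \<le> ((real m - 1) * real k - 1) * real m ^ k" by simp
qed

lemma wfun0: "wfun m 0 = -1" by (simp add: wfun_def)


lemma ra_W: "(x::real) \<ge> 2 \<Longrightarrow> (\<lambda>k::nat. ((x-1)*real k -1)*x^k+1) \<sim>[at_top] (\<lambda>k. (x-1)*real k*x^k)"
  by real_asymp
lemma ra_b: "(a::real) > 2 \<Longrightarrow> (\<lambda>k::nat. (real k + 1) powr (2-a) - (real k + 2) powr (2-a)) \<sim>[at_top] (\<lambda>k. (a-2) * real k powr (1-a))"
  by real_asymp
lemma ra_t0: "(a::real) > 2 \<Longrightarrow> (\<lambda>n::nat. (real n + real M + 2) powr (2-a)) \<longlonglongrightarrow> 0" by real_asymp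
lemma ra_t1: "(a::real) > 2 \<Longrightarrow> (\<lambda>k::nat. (real k + 2) powr (2-a)) \<sim>[at_top] (\<lambda>k. real k powr (2-a))"
  by real_asymp
lemma ra_l1: "(\<lambda>k::nat. ln (real k + 1) - ln (real k)) \<sim>[at_top] (\<lambda>k. real k powr (-1))" by real_asymp
lemma ra_l2: "(\<lambda>k::nat. ln (real k + 1)) \<sim>[at_top] (\<lambda>k. ln (real k))" by real_asymp
lemma ra_l3: "(C::real) > 0 \<Longrightarrow> filterlim (\<lambda>M::nat. C * ln (real M + 1)) at_top at_top" by real_asymp

lemma cmult_equiv: "f \<sim>[F] g \<Longrightarrow> (\<lambda>x. (c::real) * f x) \<sim>[F] (\<lambda>x. c * g x)"
  by (rule asymp_equiv_mult[OF asymp_equiv_refl])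

theorem lemma8p2:
  fixes m :: nat and P :: "nat pmf" and c0 \<alpha> :: real
  assumes "m \<ge> 2"
    and "pmf P 0 = 0"
    and "0 < c0"
    and "2 \<le> \<alpha>" and "\<alpha> \<le> 4"
    and "(\<lambda>k. pmf P k) \<sim>[at_top] (\<lambda>k. c0 / (real m ^ k * real k powr \<alpha>))"
  shows "(2 < \<alpha> \<longrightarrow>
           (\<lambda>M. pM m P M - pc m P) \<sim>[at_top]
           (\<lambda>M. (real m - 1) * c0 * (pc m P)\<^sup>2 / (\<alpha> - 2) * (1 / real M powr (\<alpha> - 2))))
       \<and> (\<alpha> = 2 \<longrightarrow>
           (\<lambda>M. pM m P M - pc m P) \<sim>[at_top]
           (\<lambda>M. 1 / ((real m - 1) * c0) * (1 / ln (real M))))"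
proof -
  define h where "h k = pmf P k * (wfun m k + 1)" for k
  define C where "C = (real m - 1) * c0"
  have Cpos: "C > 0" unfolding C_def using assms(1,3) by simp
  have h0: "0 \<le> h k" for k
  proof (cases "k = 0")
    case True then show ?thesis by (simp add: h_def wfun0)
  next
    case False then show ?thesis using wfun_nonneg[OF assms(1), of k] by (simp add: h_def)
  qed
  have psum: "(\<lambda>k. pmf P k) sums 1" by (rule pmf_sums_one)
  have pM_eq: "pM m P M = 1 / (\<Sum>k\<le>M. h k)" for M
  proof -
    define g where "g k = (if k \<le> M then h k else 0)" for k
    have "g sums (\<Sum>k\<in>{..M}. g k)" by (rule sums_finite) (auto simp: g_def)
    moreover have "(\<Sum>k\<in>{..M}. g k) = (\<Sum>k\<le>M. h k)" by (rule sum.cong) (auto simp: g_def)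
    ultimately have gs: "g sums (\<Sum>k\<le>M. h k)" by simp
    have eq: "pmf P k * wfun m (trunc M k) = g k - pmf P k" for k
      by (simp add: g_def h_def trunc_def wfun0 algebra_simps)
    have ds: "(\<lambda>k. g k - pmf P k) sums ((\<Sum>k\<le>M. h k) - 1)" by (rule sums_diff[OF gs psum])
    have g0: "0 \<le> g k" for k using h0[of k] by (simp add: g_def)
    have "summable (\<lambda>k. g k + pmf P k)"
      using gs psum by (intro summable_add) (auto simp: sums_summable)
    then have "summable (\<lambda>k. \<bar>pmf P k * wfun m (trunc M k)\<bar>)"
      by (rule summable_comparison_test'[of _ 0]) (use g0 pmf_nonneg in \<open>simp add: eq abs_le_iff\<close>)
    then have int: "integrable (measure_pmf P) (\<lambda>k. wfun m (trunc M k))"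
      by (subst pmf_integrable_iff)
    have "measure_pmf.expectation P (\<lambda>k. wfun m (trunc M k)) = (\<Sum>k\<le>M. h k) - 1"
      using pmf_expectation_sum[OF int] sums_unique[OF ds] by (simp add: eq)
    then show ?thesis by (simp add: pM_def)
  qed
  have eq2: "pmf P k * wfun m k = h k - pmf P k" for k by (simp add: h_def algebra_simps)
  have pc_sum: "pc m P = 1 / suminf h" if sh: "summable h"
  proof -
    have "summable (\<lambda>k. h k + pmf P k)"
      using sh psum by (intro summable_add) (auto simp: sums_summable)
    then have "summable (\<lambda>k. \<bar>pmf P k * wfun m k\<bar>)"
      by (rule summable_comparison_test'[of _ 0]) (use h0 pmf_nonneg in \<open>simp add: eq2 abs_le_iff\<close>)
    then have int: "integrable (measure_pmf P) (wfun m)"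
      by (subst pmf_integrable_iff)
    have ds2: "(\<lambda>k. h k - pmf P k) sums (suminf h - 1)"
      by (rule sums_diff[OF summable_sums[OF sh] psum])
    have "measure_pmf.expectation P (wfun m) = suminf h - 1"
      using pmf_expectation_sum[OF int] sums_unique[OF ds2] by (simp add: eq2)
    then show ?thesis using int by (simp add: pc_def)
  qed
  have pc_nsum: "pc m P = 0" if nsh: "\<not> summable h"
  proof -
    have "\<not> integrable (measure_pmf P) (wfun m)"
    proof
      assume "integrable (measure_pmf P) (wfun m)"
      then have "summable (\<lambda>k. \<bar>pmf P k * wfun m k\<bar>)" by (subst (asm) pmf_integrable_iff)
      then have "summable (\<lambda>k. pmf P k * wfun m k)" by (rule summable_rabs_cancel)
      then have "summable (\<lambda>k. pmf P k * wfun m k + pmf P k)"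
        using psum by (intro summable_add) (auto simp: sums_summable)
      then have "summable h" by (simp add: eq2)
      with nsh show False by simp
    qed
    then show ?thesis by (simp add: pc_def)
  qed
  have W: "(\<lambda>k. wfun m k + 1) \<sim>[at_top] (\<lambda>k. (real m - 1) * real k * real m ^ k)"
    using ra_W[of "real m"] assms(1) by (simp add: wfun_def)
  have hasy: "h \<sim>[at_top] (\<lambda>k. C * real k powr (1 - \<alpha>))"
  proof -
    have "h \<sim>[at_top] (\<lambda>k. c0 / (real m ^ k * real k powr \<alpha>) * ((real m - 1) * real k * real m ^ k))"
      unfolding h_def by (rule asymp_equiv_mult[OF assms(6) W])
    moreover have "eventually (\<lambda>k. c0 / (real m ^ k * real k powr \<alpha>) * ((real m - 1) * real k * real m ^ k)
        = C * real k powr (1 - \<alpha>)) at_top"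
      using eventually_gt_at_top[of 0]
    proof eventually_elim
      case (elim k)
      have "real k powr (1 - \<alpha>) = real k / real k powr \<alpha>" by (simp add: powr_diff)
      then show ?case using elim assms(1) by (simp add: C_def field_simps)
    qed
    ultimately show ?thesis by (elim asymp_equiv_transfer) auto
  qed
  show ?thesis
  proof (intro conjI impI)
    assume a2: "2 < \<alpha>"
    show "(\<lambda>M. pM m P M - pc m P) \<sim>[at_top]
           (\<lambda>M. (real m - 1) * c0 * (pc m P)\<^sup>2 / (\<alpha> - 2) * (1 / real M powr (\<alpha> - 2)))"
    proof -
      define b where "b k = C/(\<alpha>-2) * ((real k + 1) powr (2-\<alpha>) - (real k + 2) powr (2-\<alpha>))" for k
      have bpos: "0 < b k" for k
      proof -
        have "(real k + 2) powr (2-\<alpha>) < (real k + 1) powr (2-\<alpha>)"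
          by (rule powr_less_mono2_neg) (use a2 in auto)
        then show ?thesis unfolding b_def using Cpos a2 by simp
      qed
      have "b \<sim>[at_top] (\<lambda>k. C/(\<alpha>-2) * ((\<alpha>-2) * real k powr (1-\<alpha>)))"
        unfolding b_def by (rule cmult_equiv[OF ra_b[OF a2]])
      also have "(\<lambda>k. C/(\<alpha>-2) * ((\<alpha>-2) * real k powr (1-\<alpha>))) = (\<lambda>k. C * real k powr (1-\<alpha>))"
        using a2 by (auto simp: fun_eq_iff)
      finally have bC: "b \<sim>[at_top] (\<lambda>k. C * real k powr (1-\<alpha>))" .
      have hb: "h \<sim>[at_top] b" by (rule asymp_equiv_trans[OF hasy asymp_equiv_symI[OF bC]])
      define f where "f M n = (real n + real M + 2) powr (2-\<alpha>)" for M n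
      have tsum: "(\<lambda>k. b (k + Suc M)) sums (C/(\<alpha>-2) * (real M + 2) powr (2-\<alpha>))" for M
      proof -
        have "(\<lambda>n. f M n - f M (Suc n)) sums (f M 0 - 0)"
          by (rule telescope_sums') (use ra_t0[OF a2] in \<open>simp add: f_def\<close>)
        then have "(\<lambda>n. C/(\<alpha>-2) * (f M n - f M (Suc n))) sums (C/(\<alpha>-2) * (f M 0 - 0))"
          by (rule sums_mult)
        moreover have "(\<lambda>n. C/(\<alpha>-2) * (f M n - f M (Suc n))) = (\<lambda>k. b (k + Suc M))"
          by (auto simp: fun_eq_iff f_def b_def algebra_simps)
        ultimately show ?thesis by (simp add: f_def)
      qed
      have sb0: "summable (\<lambda>k. b (k + Suc 0))" by (rule sums_summable[OF tsum[of 0]])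
      have sb: "summable b" using sb0 by (simp only: summable_iff_shift)
      have sh: "summable h" by (rule tail_equiv(1)[OF h0 bpos sb hb])
      have teq: "(\<lambda>M. \<Sum>k. h (k + M)) \<sim>[at_top] (\<lambda>M. \<Sum>k. b (k + M))"
        by (rule tail_equiv(2)[OF h0 bpos sb hb])
      have "(\<lambda>M. \<Sum>k. h (k + Suc M)) \<sim>[at_top] (\<lambda>M. \<Sum>k. b (k + Suc M))"
        by (rule asymp_equiv_compose'[OF teq filterlim_Suc])
      also have "(\<lambda>M. \<Sum>k. b (k + Suc M)) = (\<lambda>M. C/(\<alpha>-2) * (real M + 2) powr (2-\<alpha>))"
        using tsum by (auto simp: fun_eq_iff sums_iff)
      also have "\<dots> \<sim>[at_top] (\<lambda>M. C/(\<alpha>-2) * real M powr (2-\<alpha>))"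
        by (rule cmult_equiv[OF ra_t1[OF a2]])
      finally have Teq: "(\<lambda>M. \<Sum>k. h (k + Suc M)) \<sim>[at_top] (\<lambda>M. C/(\<alpha>-2) * real M powr (2-\<alpha>))" .
      define Sig where "Sig = suminf h"
      have split: "Sig = (\<Sum>k. h (k + Suc M)) + (\<Sum>k\<le>M. h k)" for M
        unfolding Sig_def using suminf_split_initial_segment[OF sh, of "Suc M"] by (simp add: lessThan_Suc_atMost)
      have lim: "(\<lambda>M. \<Sum>k\<le>M. h k) \<longlonglongrightarrow> Sig" unfolding Sig_def by (rule summable_LIMSEQ'[OF sh])
      have Sigpos: "Sig > 0"
      proof -
        have "eventually (\<lambda>k. 0 < h k) at_top"
          using asymp_equiv_eventually_pos_iff[OF hb] by eventually_elim (use bpos in auto)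
        then obtain N where N: "\<And>k. k \<ge> N \<Longrightarrow> 0 < h k" unfolding eventually_at_top_linorder by blast
        define k where "k = N"
        have hk: "0 < h k" using N[of N] by (simp add: k_def)
        have "h k \<le> (\<Sum>j\<le>k. h j)" by (rule member_le_sum) (use h0 in auto)
        also have "\<dots> \<le> Sig" unfolding Sig_def by (rule sum_le_suminf[OF sh]) (use h0 in auto)
        finally show ?thesis using hk by simp
      qed
      have pcS: "pc m P = 1 / Sig" unfolding Sig_def by (rule pc_sum[OF sh])
      have evS: "eventually (\<lambda>M. 0 < (\<Sum>k\<le>M. h k)) at_top"
        by (rule order_tendstoD(1)[OF lim Sigpos])
      have den: "(\<lambda>M. (\<Sum>k\<le>M. h k) * Sig) \<sim>[at_top] (\<lambda>M. Sig * Sig)"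
        by (rule asymp_equiv_mult[OF tendsto_imp_asymp_equiv_const[OF lim] asymp_equiv_refl]) (use Sigpos in simp)
      have main: "(\<lambda>M. (\<Sum>k. h (k + Suc M)) / ((\<Sum>k\<le>M. h k) * Sig)) \<sim>[at_top]
                  (\<lambda>M. (C/(\<alpha>-2) * real M powr (2-\<alpha>)) / (Sig * Sig))"
        by (rule asymp_equiv_divide[OF Teq den])
      have e1: "eventually (\<lambda>M. (\<Sum>k. h (k + Suc M)) / ((\<Sum>k\<le>M. h k) * Sig) = pM m P M - pc m P) at_top"
        using evS
      proof eventually_elim
        case (elim M)
        show ?case unfolding pM_eq pcS using split[of M] elim Sigpos by (simp add: field_simps)
      qed
      have e2: "eventually (\<lambda>M. (C/(\<alpha>-2) * real M powr (2-\<alpha>)) / (Sig * Sig) =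
          (real m - 1) * c0 * (pc m P)\<^sup>2 / (\<alpha> - 2) * (1 / real M powr (\<alpha> - 2))) at_top"
        using eventually_gt_at_top[of 0]
      proof eventually_elim
        case (elim M)
        have "real M powr (2-\<alpha>) = 1 / real M powr (\<alpha>-2)"
          using powr_minus_divide[of "real M" "\<alpha>-2"] by simp
        then show ?case unfolding pcS C_def by (simp add: power2_eq_square)
      qed
      show ?thesis using main e1 e2 by (elim asymp_equiv_transfer) auto
    qed
  next
    assume a2: "\<alpha> = 2"
    show "(\<lambda>M. pM m P M - pc m P) \<sim>[at_top] (\<lambda>M. 1 / ((real m - 1) * c0) * (1 / ln (real M)))"
    proof -
      define b where "b k = C * (ln (real k + 1) - ln (real k))" for k
      have b0: "0 \<le> b k" for k
      proof (cases "k = 0")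
        case True then show ?thesis by (simp add: b_def)
      next
        case False
        then have "ln (real k) \<le> ln (real k + 1)" by (subst ln_le_cancel_iff) auto
        then show ?thesis using Cpos by (simp add: b_def)
      qed
      have bC: "b \<sim>[at_top] (\<lambda>k. C * real k powr (-1))"
        unfolding b_def by (rule cmult_equiv[OF ra_l1])
      have hasy2: "h \<sim>[at_top] (\<lambda>k. C * real k powr (-1))" using hasy a2 by simp
      have hb: "h \<sim>[at_top] b" by (rule asymp_equiv_trans[OF hasy2 asymp_equiv_symI[OF bC]])
      have Sb: "(\<Sum>k\<le>M. b k) = C * ln (real M + 1)" for M
      proof -
        have "(\<Sum>k\<le>M. b k) = C * (\<Sum>k\<le>M. (- ln (real k)) - (- ln (real (Suc k))))"
          by (simp add: b_def sum_distrib_left algebra_simps)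
        also have "\<dots> = C * ln (real M + 1)" by (subst sum_telescope) simp
        finally show ?thesis .
      qed
      have limb: "filterlim (\<lambda>M. \<Sum>k\<le>M. b k) at_top at_top"
        unfolding Sb by (rule ra_l3[OF Cpos])
      have "(\<lambda>M. \<Sum>k\<le>M. h k) \<sim>[at_top] (\<lambda>M. \<Sum>k\<le>M. b k)"
        by (rule partial_equiv[OF h0 b0 hb limb])
      also have "(\<lambda>M. \<Sum>k\<le>M. b k) = (\<lambda>M. C * ln (real M + 1))" by (simp add: Sb)
      also have "\<dots> \<sim>[at_top] (\<lambda>M. C * ln (real M))" by (rule cmult_equiv[OF ra_l2])
      finally have Seq: "(\<lambda>M. \<Sum>k\<le>M. h k) \<sim>[at_top] (\<lambda>M. C * ln (real M))" .
      have nsh: "\<not> summable h"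
      proof
        assume sh: "summable h"
        have lim: "(\<lambda>M. \<Sum>k\<le>M. h k) \<longlonglongrightarrow> suminf h" by (rule summable_LIMSEQ'[OF sh])
        have "filterlim (\<lambda>M. \<Sum>k\<le>M. b k) at_top at_top" by (rule limb)
        then have "filterlim (\<lambda>M. \<Sum>k\<le>M. h k) at_top at_top"
          by (rule asymp_equiv_at_top_transfer[OF asymp_equiv_symI[OF partial_equiv[OF h0 b0 hb limb]]])
        then have "eventually (\<lambda>M. suminf h + 1 \<le> (\<Sum>k\<le>M. h k)) at_top"
          by (simp add: filterlim_at_top)
        moreover have "eventually (\<lambda>M. (\<Sum>k\<le>M. h k) < suminf h + 1) at_top"
          by (rule order_tendstoD(2)[OF lim]) simp
        ultimately have "eventually (\<lambda>M::nat. False) at_top"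
          by eventually_elim simp
        then show False by simp
      qed
      have pc0: "pc m P = 0" by (rule pc_nsum[OF nsh])
      have "(\<lambda>M. 1 / (\<Sum>k\<le>M. h k)) \<sim>[at_top] (\<lambda>M. 1 / (C * ln (real M)))"
        by (rule asymp_equiv_divide[OF asymp_equiv_refl Seq])
      then show ?thesis by (simp add: pM_eq pc0 C_def)
    qed
  qed
qed
end
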